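(* Let $\mathbf X=(X_1,\dots,X_d)$ be a random vector whose copula $C$ is in the domain of attraction of a multivariate extreme value distribution $G$, and suppose there is an index $\kappa\in\{1,\dots,d\}$ with $\omega(F_\kappa)=:\omega^*$ such that $\lim_{s\uparrow\omega^*}\frac{1-F_i(s)}{1-F_\kappa(s)}=\gamma_i\in[0,\infty)$ for all $1\le i\le d$. Then there exists a norm $\|\cdot\|_D$ on $\mathbb R^d$ with $\|\mathbf e_i\|_D=1$, $1\le i\le d$, such that for every nonempty index set $K\subset\{1,\dots,d\}$, \[ P(X_k\le s,\ k\in K)=1-(1-F_\kappa(s))\Big\|\sum_{k\in K}\gamma_k\mathbf e_k\Big\|_D+o(1-F_\kappa(s))\qquad\text{as } s\uparrow\omega^*. \]
   Context: $F_i$ denotes the distribution function of $X_i$; the copula $C$ of $\mathbf X$ is a distribution function on $[0,1]^d$ with uniform margins such that $\mathbf X$ has the same distribution as $(F_1^{-1}(U_1),\dots,F_d^{-1}(U_d))$ for $\mathbf U=(U_1,\dots,U_d)\sim C$, where $F^{-1}(q)=\inf\{t\in\mathbb R: F(t)\ge q\}$ is the generalized inverse. The upper endpoint of a distribution function $F$ is $\omega(F)=\sup\{t\in\mathbb R:F(t)<1\}$. "$C$ is in the domain of attraction of $G$" means $C^n\big(1+\tfrac{x_1}{n},\dots,1+\tfrac{x_d}{n}\big)\to G(\mathbf x)$ as $n\to\infty$ for all $\mathbf x=(x_1,\dots,x_d)\le\mathbf 0$. $\mathbf e_i$ is the $i$-th unit vector in $\mathbb R^d$. *)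

theory Defs
  imports "HOL-Probability.Probability" "HOL-Library.Landau_Symbols"
begin

definition marg_cdf :: "'a measure \<Rightarrow> ('a \<Rightarrow> real^'d) \<Rightarrow> 'd \<Rightarrow> real \<Rightarrow> real" where
  "marg_cdf M X i t = measure M {w \<in> space M. X w $ i \<le> t}"

definition geninv :: "(real \<Rightarrow> real) \<Rightarrow> real \<Rightarrow> real" where
  "geninv F q = Inf {t. F t \<ge> q}"

definition upper_endpoint :: "(real \<Rightarrow> real) \<Rightarrow> ereal" where
  "upper_endpoint F = Sup (ereal ` {t. F t < 1})"

definition up_to :: "ereal \<Rightarrow> real filter" where
  "up_to w = (if w = \<infinity> then at_top else at_left (real_of_ereal w))"

definition mdf :: "(real^'d) measure \<Rightarrow> real^'d \<Rightarrow> real" where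
  "mdf Q x = measure Q {y. \<forall>i. y $ i \<le> x $ i}"

definition is_copula_of :: "(real^'d \<Rightarrow> real) \<Rightarrow> 'a measure \<Rightarrow> ('a \<Rightarrow> real^'d) \<Rightarrow> bool" where
  "is_copula_of C M X \<longleftrightarrow>
     (\<exists>Q. prob_space Q \<and> sets Q = sets (borel :: (real^'d) measure) \<and>
          C = mdf Q \<and>
          (\<forall>i. \<forall>t\<in>{0..1}. measure Q {y. y $ i \<le> t} = t) \<and>
          distr Q borel (\<lambda>u. \<chi> i. geninv (marg_cdf M X i) (u $ i)) = distr M borel X)"

definition mevd :: "(real^'d \<Rightarrow> real) \<Rightarrow> bool" where
  "mevd G \<longleftrightarrow>
     (\<exists>Q. prob_space Q \<and> sets Q = sets (borel :: (real^'d) measure) \<and> G = mdf Q \<and>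
          (\<forall>i. \<not> (\<exists>c. measure Q {y. y $ i = c} = 1))) \<and>
     (\<forall>n::nat. n \<ge> 1 \<longrightarrow> (\<exists>a b :: real^'d. (\<forall>i. a $ i > 0) \<and>
          (\<forall>x. G (\<chi> i. a $ i * x $ i + b $ i) ^ n = G x)))"

definition in_doa :: "(real^'d \<Rightarrow> real) \<Rightarrow> (real^'d \<Rightarrow> real) \<Rightarrow> bool" where
  "in_doa C G \<longleftrightarrow> (\<forall>x::real^'d. (\<forall>i. x $ i \<le> 0) \<longrightarrow>
      (\<lambda>n. C (\<chi> i. 1 + x $ i / real n) ^ n) \<longlonglongrightarrow> G x)"

definition is_norm :: "(real^'d \<Rightarrow> real) \<Rightarrow> bool" where
  "is_norm N \<longleftrightarrow> (\<forall>x. N x \<ge> 0) \<and> (\<forall>x. N x = 0 \<longleftrightarrow> x = 0) \<and>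
     (\<forall>c x. N (c *\<^sub>R x) = \<bar>c\<bar> * N x) \<and> (\<forall>x y. N (x + y) \<le> N x + N y)"

end

theory Submission
  imports Defs
begin


locale uq =
  fixes Q :: "(real^'d) measure"
  assumes ps: "prob_space Q" and sQ: "sets Q = sets (borel :: (real^'d) measure)"
  and unif: "\<And>i t. t \<in> {0..1} \<Longrightarrow> measure Q {y. y $ i \<le> t} = t"
begin

sublocale prob_space Q by (rule ps)

lemma spQ: "space Q = UNIV" using sets_eq_imp_space_eq[OF sQ] by simp

lemma setsQ: "A \<in> sets borel \<Longrightarrow> A \<in> sets Q" using sQ by simp

lemma S1[simp]: "{y. \<forall>i. y$i \<le> u$i} \<in> sets Q" by (rule setsQ) measurable
lemma S2[simp]: "{y. y$i \<le> t} \<in> sets Q" by (rule setsQ) measurable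
lemma S3[simp]: "{y. t < y$i} \<in> sets Q" by (rule setsQ) measurable
lemma S4[simp]: "{y. a < y$i \<and> y$i \<le> b} \<in> sets Q" by (rule setsQ) measurable

lemma mdf_mono: "(\<And>i. u$i \<le> u'$i) \<Longrightarrow> mdf Q u \<le> mdf Q u'"
  unfolding mdf_def by (rule finite_measure_mono) (auto intro: order_trans)

lemma mdf_le1: "mdf Q u \<le> 1" unfolding mdf_def by simp
lemma mdf_ge0: "mdf Q u \<ge> 0" unfolding mdf_def by simp

lemma mdf_le: assumes "0 \<le> u$i" "u$i \<le> 1" shows "mdf Q u \<le> u$i"
proof -
  have "mdf Q u \<le> measure Q {y. y$i \<le> u$i}"
    unfolding mdf_def by (rule finite_measure_mono) auto
  also have "\<dots> = u$i" using assms unif by auto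
  finally show ?thesis .
qed

lemma gt_meas: assumes "0 \<le> t" "t \<le> 1" shows "measure Q {y. t < y$i} = 1 - t"
proof -
  have "measure Q {y. t < y$i} = measure Q (space Q - {y. y$i \<le> t})"
    by (rule arg_cong[where f="measure Q"]) (auto simp: spQ)
  also have "\<dots> = 1 - t" using prob_compl[of "{y. y$i \<le> t}"] unif assms by auto
  finally show ?thesis .
qed

lemma mdf_ge: assumes "\<And>i. 0 \<le> u$i \<and> u$i \<le> 1" shows "mdf Q u \<ge> 1 - (\<Sum>i\<in>UNIV. 1 - u$i)"
proof -
  have "mdf Q u = measure Q (space Q - (\<Union>i. {y. u$i < y$i}))"
    unfolding mdf_def by (rule arg_cong[where f="measure Q"]) (auto simp: spQ not_less, meson leD)
  also have "\<dots> = 1 - measure Q (\<Union>i. {y. u$i < y$i})"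
    by (rule prob_compl) auto
  finally have e: "mdf Q u = 1 - measure Q (\<Union>i. {y. u$i < y$i})" .
  have "measure Q (\<Union>i. {y. u$i < y$i}) \<le> (\<Sum>i\<in>UNIV. measure Q {y. u$i < y$i})"
    by (rule finite_measure_subadditive_finite) auto
  also have "\<dots> = (\<Sum>i\<in>UNIV. 1 - u$i)" using gt_meas assms by simp
  finally show ?thesis using e by linarith
qed

lemma mdf_lip_le: assumes "\<And>i. 0 \<le> u$i \<and> u$i \<le> u'$i \<and> u'$i \<le> 1"
  shows "mdf Q u' - mdf Q u \<le> (\<Sum>i\<in>UNIV. u'$i - u$i)"
proof -
  have "mdf Q u' \<le> measure Q ({y. \<forall>i. y$i \<le> u$i} \<union> (\<Union>i. {y. u$i < y$i \<and> y$i \<le> u'$i}))"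
    unfolding mdf_def by (rule finite_measure_mono) (auto simp: not_less intro!: setsQ, measurable)
  also have "\<dots> \<le> mdf Q u + measure Q (\<Union>i. {y. u$i < y$i \<and> y$i \<le> u'$i})"
    unfolding mdf_def by (rule measure_Un_le) auto
  also have "measure Q (\<Union>i. {y. u$i < y$i \<and> y$i \<le> u'$i}) \<le> (\<Sum>i\<in>UNIV. measure Q {y. u$i < y$i \<and> y$i \<le> u'$i})"
    by (rule finite_measure_subadditive_finite) auto
  also have "\<dots> = (\<Sum>i\<in>UNIV. u'$i - u$i)"
  proof (rule sum.cong)
    fix i
    have "{y. u$i < y$i \<and> y$i \<le> u'$i} = {y. y$i \<le> u'$i} - {y. y$i \<le> u$i}" by auto
    then have "measure Q {y. u$i < y$i \<and> y$i \<le> u'$i} = measure Q {y. y$i \<le> u'$i} - measure Q {y. y$i \<le> u$i}"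
      using assms[of i] by (simp add: finite_measure_Diff subset_eq)
    then show "measure Q {y. u$i < y$i \<and> y$i \<le> u'$i} = u'$i - u$i" using assms[of i] unif by simp
  qed simp
  finally show ?thesis by simp
qed

lemma mdf_lip: assumes "\<And>i. 0 \<le> u$i \<and> u$i \<le> 1" "\<And>i. 0 \<le> u'$i \<and> u'$i \<le> 1"
  shows "\<bar>mdf Q u - mdf Q u'\<bar> \<le> (\<Sum>i\<in>UNIV. \<bar>u$i - u'$i\<bar>)"
proof -
  define m where "m = (\<chi> i. min (u$i) (u'$i))"
  have 1: "mdf Q u - mdf Q m \<le> (\<Sum>i\<in>UNIV. u$i - m$i)"
    by (rule mdf_lip_le) (use assms in \<open>auto simp: m_def\<close>)
  have 2: "mdf Q u' - mdf Q m \<le> (\<Sum>i\<in>UNIV. u'$i - m$i)"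
    by (rule mdf_lip_le) (use assms in \<open>auto simp: m_def\<close>)
  have 3: "mdf Q m \<le> mdf Q u" "mdf Q m \<le> mdf Q u'" by (rule mdf_mono, simp add: m_def)+
  have 4: "(\<Sum>i\<in>UNIV. u$i - m$i) \<le> (\<Sum>i\<in>UNIV. \<bar>u$i - u'$i\<bar>)"
       "(\<Sum>i\<in>UNIV. u'$i - m$i) \<le> (\<Sum>i\<in>UNIV. \<bar>u$i - u'$i\<bar>)"
    by (rule sum_mono, simp add: m_def)+
  show ?thesis using 1 2 3 4 by linarith
qed


lemma seq_lim:
  assumes doa: "in_doa (mdf Q) G" and v: "\<And>i. v$i \<ge> 0"
  shows "G (\<chi> i. - v$i) > 0"
    "(\<lambda>n. real n * (1 - mdf Q (\<chi> i. 1 - v$i / real n))) \<longlonglongrightarrow> - ln (G (\<chi> i. - v$i))"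
proof -
  define c where "c n = mdf Q (\<chi> i. 1 - v$i / real n)" for n
  define S where "S = (\<Sum>i\<in>UNIV. v$i)"
  have S0: "S \<ge> 0" unfolding S_def by (simp add: sum_nonneg v)
  have vS: "v$i \<le> S" for i unfolding S_def
    by (rule member_le_sum) (auto simp: v)
  have ev: "eventually (\<lambda>n. S < real n) sequentially"
    using filterlim_real_sequentially by (simp add: filterlim_at_top_dense)
  have bnd: "1 - S / real n \<le> c n \<and> c n \<le> 1 \<and> 0 < c n" if "S < real n" for n
  proof -
    have n0: "real n > 0" using that S0 by linarith
    have cc: "0 \<le> 1 - v$i / real n \<and> 1 - v$i / real n \<le> 1" for i
    proof -
      have "v$i / real n \<le> S / real n" using vS[of i] n0 by (intro divide_right_mono) auto
      moreover have "S / real n < 1" using that n0 by simp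
      moreover have "0 \<le> v$i / real n" using v[of i] by simp
      ultimately show ?thesis by linarith
    qed
    have "c n \<ge> 1 - (\<Sum>i\<in>UNIV. 1 - (1 - v$i / real n))"
      unfolding c_def by (rule order_trans[OF _ mdf_ge]) (use cc in auto)
    also have "(\<Sum>i\<in>UNIV. 1 - (1 - v$i / real n)) = S / real n"
      by (simp add: S_def sum_divide_distrib)
    finally have "1 - S / real n \<le> c n" by simp
    moreover have "S / real n < 1" using that n0 by simp
    ultimately show ?thesis using mdf_le1 unfolding c_def by auto
  qed
  have lim1: "(\<lambda>n. c n ^ n) \<longlonglongrightarrow> G (\<chi> i. - v$i)"
    using doa[unfolded in_doa_def, rule_format, of "\<chi> i. - v$i"] v
    by (simp add: c_def)
  have lim2: "(\<lambda>n. (1 + (-S) / real n) ^ n) \<longlonglongrightarrow> exp (-S)"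
    by (rule tendsto_exp_limit_sequentially)
  have "exp (-S) \<le> G (\<chi> i. - v$i)"
  proof (rule tendsto_le[OF _ lim1 lim2])
    show "\<forall>\<^sub>F n in sequentially. (1 + - S / real n) ^ n \<le> c n ^ n"
      using ev
    proof eventually_elim
      case (elim n)
      have "0 \<le> 1 - S / real n" using elim S0 by (auto simp: field_simps)
      then show ?case using bnd[OF elim] by (intro power_mono) auto
    qed
  qed simp
  then show Gpos: "G (\<chi> i. - v$i) > 0" using exp_gt_zero by (meson less_le_trans)
  have c1: "c \<longlonglongrightarrow> 1"
  proof (rule real_tendsto_sandwich)
    show "\<forall>\<^sub>F n in sequentially. 1 - S / real n \<le> c n" using ev by eventually_elim (use bnd in auto)
    show "\<forall>\<^sub>F n in sequentially. c n \<le> 1" using ev by eventually_elim (use bnd in auto)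
    show "(\<lambda>n. 1 - S / real n) \<longlonglongrightarrow> 1"
      using tendsto_diff[OF tendsto_const tendsto_divide_0[OF tendsto_const filterlim_at_top_imp_at_infinity[OF filterlim_real_sequentially]]]
      by simp
  qed simp
  have lnlim: "(\<lambda>n. - (real n * ln (c n))) \<longlonglongrightarrow> - ln (G (\<chi> i. - v$i))"
  proof -
    have "(\<lambda>n. ln (c n ^ n)) \<longlonglongrightarrow> ln (G (\<chi> i. - v$i))"
      by (rule tendsto_ln[OF lim1]) (use Gpos in simp)
    moreover have "eventually (\<lambda>n. ln (c n ^ n) = real n * ln (c n)) sequentially"
      using ev by eventually_elim (use bnd in \<open>simp add: ln_realpow\<close>)
    ultimately have "(\<lambda>n. real n * ln (c n)) \<longlonglongrightarrow> ln (G (\<chi> i. - v$i))"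
      by (rule Lim_transform_eventually)
    then show ?thesis by (rule tendsto_minus)
  qed
  show "(\<lambda>n. real n * (1 - mdf Q (\<chi> i. 1 - v$i / real n))) \<longlonglongrightarrow> - ln (G (\<chi> i. - v$i))"
    unfolding c_def[symmetric]
  proof (rule real_tendsto_sandwich)
    show "(\<lambda>n. c n * - (real n * ln (c n))) \<longlonglongrightarrow> - ln (G (\<chi> i. - v$i))"
      using tendsto_mult[OF c1 lnlim] by simp
    show "\<forall>\<^sub>F n in sequentially. c n * - (real n * ln (c n)) \<le> real n * (1 - c n)"
      using ev
    proof eventually_elim
      case (elim n)
      then have cp: "0 < c n" and "c n \<le> 1" using bnd by auto
      have "ln (1 / c n) \<le> 1 / c n - 1" by (rule ln_le_minus_one) (use cp in simp)
      then have "- ln (c n) \<le> (1 - c n) / c n" using cp by (simp add: ln_div field_simps)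
      then have "c n * - ln (c n) \<le> 1 - c n" using cp by (simp add: field_simps)
      then have "real n * (c n * - ln (c n)) \<le> real n * (1 - c n)" by (intro mult_left_mono) auto
      then show ?case by (simp add: algebra_simps)
    qed
    show "\<forall>\<^sub>F n in sequentially. real n * (1 - c n) \<le> - (real n * ln (c n))"
      using ev
    proof eventually_elim
      case (elim n)
      then have cp: "0 < c n" using bnd by auto
      have "ln (c n) \<le> c n - 1" by (rule ln_le_minus_one) (use cp in simp)
      then have "real n * (1 - c n) \<le> real n * (- ln (c n))" by (intro mult_left_mono) auto
      then show ?case by simp
    qed
  qed (rule lnlim)
qed

end

context uq begin

lemma rlim:
  assumes v: "\<And>i. v$i \<ge> 0"
    and a: "(\<lambda>n. real n * (1 - mdf Q (\<chi> i. 1 - v$i / real n))) \<longlonglongrightarrow> L"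
  shows "((\<lambda>e. (1 - mdf Q (\<chi> i. 1 - e * v$i)) / e) \<longlongrightarrow> L) (at_right 0)"
proof -
  define p where "p n = 1 - mdf Q (\<chi> i. 1 - v$i / real n)" for n
  define N where "N e = nat (floor (inverse e))" for e :: real
  have Nlim: "filterlim N sequentially (at_right 0)"
    unfolding N_def
    by (rule filterlim_compose[OF filterlim_nat_sequentially filterlim_compose[OF filterlim_floor_sequentially filterlim_inverse_at_top_right]])
  have p0: "p n \<ge> 0" for n unfolding p_def using mdf_le1 by simp
  have b: "(\<lambda>n. p n * (real n + 1)) \<longlonglongrightarrow> L"
  proof -
    have "(\<lambda>n. (real n * p n) * (real (Suc n) / real n)) \<longlonglongrightarrow> L * 1"
      by (rule tendsto_mult[OF a[folded p_def] LIMSEQ_Suc_n_over_n])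
    moreover have "eventually (\<lambda>n. (real n * p n) * (real (Suc n) / real n) = p n * (real n + 1)) sequentially"
      using eventually_gt_at_top[of 0] by eventually_elim (simp add: field_simps)
    ultimately show ?thesis by (simp add: Lim_transform_eventually)
  qed
  have d: "(\<lambda>n. p (Suc n) * real n) \<longlonglongrightarrow> L"
  proof -
    have "(\<lambda>n. (real (Suc n) * p (Suc n)) * (real n / real (Suc n))) \<longlonglongrightarrow> L * 1"
      by (rule tendsto_mult[OF LIMSEQ_Suc[OF a[folded p_def]] LIMSEQ_n_over_Suc_n])
    then show ?thesis by (simp add: field_simps del: of_nat_Suc)
  qed
  show ?thesis
  proof (rule real_tendsto_sandwich)
    show "((\<lambda>e. p (Suc (N e)) * real (N e)) \<longlongrightarrow> L) (at_right 0)"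
      by (rule filterlim_compose[OF d Nlim])
    show "((\<lambda>e. p (N e) * (real (N e) + 1)) \<longlongrightarrow> L) (at_right 0)"
      by (rule filterlim_compose[OF b Nlim])
    have key: "p (Suc (N e)) * real (N e) \<le> (1 - mdf Q (\<chi> i. 1 - e * v$i)) / e
       \<and> (1 - mdf Q (\<chi> i. 1 - e * v$i)) / e \<le> p (N e) * (real (N e) + 1)"
      if e: "0 < e" "e < 1" for e
    proof -
      define n where "n = N e"
      have ie: "inverse e > 1" using e by (simp add: one_less_inverse)
      have f1: "1 \<le> floor (inverse e)" using ie by (simp add: le_floor_iff)
      have rn: "real n = real_of_int (floor (inverse e))" unfolding n_def N_def by (rule of_nat_nat) (use f1 in linarith)
      have n1: "1 \<le> n" using nat_mono[OF f1] unfolding n_def N_def by simp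
      have fl: "real n \<le> inverse e" "inverse e < real n + 1" "1 \<le> n"
        using rn of_int_floor_le[of "inverse e"] real_of_int_floor_add_one_gt[of "inverse e"] n1
        by auto
      have n0: "real n > 0" using fl by simp
      have en: "e * real n \<le> 1"
        using mult_left_mono[OF fl(1), of e] e by simp
      have en1: "e * (real n + 1) > 1"
        using mult_strict_left_mono[OF fl(2), of e] e by simp
      have e1: "e \<le> 1 / real n" using en n0 by (simp add: pos_le_divide_eq)
      have e2: "1 / (real n + 1) < e" using en1 n0 by (simp add: pos_divide_less_eq mult.commute)
      have m1: "mdf Q (\<chi> i. 1 - v$i / real n) \<le> mdf Q (\<chi> i. 1 - e * v$i)"
      proof (rule mdf_mono)
        fix i
        have "e * v$i \<le> (1 / real n) * v$i" by (rule mult_right_mono[OF e1 v])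
        then show "(\<chi> i. 1 - v$i / real n)$i \<le> (\<chi> i. 1 - e * v$i)$i" by simp
      qed
      have m2: "mdf Q (\<chi> i. 1 - e * v$i) \<le> mdf Q (\<chi> i. 1 - v$i / real (Suc n))"
      proof (rule mdf_mono)
        fix i
        have "(1 / (real n + 1)) * v$i \<le> e * v$i" by (rule mult_right_mono[OF less_imp_le[OF e2] v])
        then show "(\<chi> i. 1 - e * v$i)$i \<le> (\<chi> i. 1 - v$i / real (Suc n))$i" by (simp add: add.commute)
      qed
      have up: "(1 - mdf Q (\<chi> i. 1 - e * v$i)) / e \<le> p n * (real n + 1)"
      proof -
        have "(1 - mdf Q (\<chi> i. 1 - e * v$i)) / e \<le> p n / e"
          using m1 e unfolding p_def by (intro divide_right_mono) auto
        also have "\<dots> = p n * inverse e" by (simp add: field_simps)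
        also have "\<dots> \<le> p n * (real n + 1)" using fl p0[of n] by (intro mult_left_mono) auto
        finally show ?thesis .
      qed
      have lo: "p (Suc n) * real n \<le> (1 - mdf Q (\<chi> i. 1 - e * v$i)) / e"
      proof -
        have "p (Suc n) * real n \<le> p (Suc n) * inverse e" using fl p0 by (intro mult_left_mono) auto
        also have "\<dots> = p (Suc n) / e" by (simp add: field_simps)
        also have "\<dots> \<le> (1 - mdf Q (\<chi> i. 1 - e * v$i)) / e"
          using m2 e unfolding p_def by (intro divide_right_mono) auto
        finally show ?thesis .
      qed
      show ?thesis using up lo n_def by simp
    qed
    have ev: "eventually (\<lambda>e. 0 < e \<and> e < (1::real)) (at_right 0)"
      by (rule eventually_at_rightI[of 0 1]) auto
    show "\<forall>\<^sub>F e in at_right 0. p (Suc (N e)) * real (N e) \<le> (1 - mdf Q (\<chi> i. 1 - e * v$i)) / e"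
      using ev by eventually_elim (use key in blast)
    show "\<forall>\<^sub>F e in at_right 0. (1 - mdf Q (\<chi> i. 1 - e * v$i)) / e \<le> p (N e) * (real (N e) + 1)"
      using ev by eventually_elim (use key in blast)
  qed
qed

end


lemma dc_card:
  assumes dc: "\<And>s s'. 1 \<le> s' \<Longrightarrow> s' \<le> s \<Longrightarrow> P s \<Longrightarrow> P s'"
    and lt: "card {s\<in>{1..T::nat}. P s} < T"
  shows "\<not> P (Suc (card {s\<in>{1..T}. P s}))"
proof
  define m where "m = card {s\<in>{1..T}. P s}"
  assume "P (Suc (card {s\<in>{1..T}. P s}))"
  then have Pm: "P (Suc m)" by (simp add: m_def)
  have "{1..Suc m} \<subseteq> {s\<in>{1..T}. P s}"
    using dc[OF _ _ Pm] lt by (auto simp: m_def)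
  then have "card {1..Suc m} \<le> m" unfolding m_def by (intro card_mono) auto
  then show False by simp
qed

lemma count_sub:
  fixes w v v' :: "real^'d"
  assumes v: "\<And>i. 0 \<le> v$i" and v': "\<And>i. 0 \<le> v'$i"
  shows "card {s\<in>{1..T}. \<exists>i. real s * w$i < v$i + v'$i}
    \<le> card {s\<in>{1..T}. \<exists>i. real s * w$i < v$i} + card {s\<in>{1..T}. \<exists>i. real s * w$i < v'$i} + 1"
proof -
  define m1 where "m1 = card {s\<in>{1..T}. \<exists>i. real s * w$i < v$i}"
  define m2 where "m2 = card {s\<in>{1..T}. \<exists>i. real s * w$i < v'$i}"
  have dcg: "\<exists>i. real s' * w$i < u$i"
    if "\<And>i. 0 \<le> u$i" "1 \<le> s'" "s' \<le> s" "\<exists>i. real s * w$i < u$i" for u :: "real^'d" and s s' :: nat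
  proof -
    from that(4) obtain i where i: "real s * w$i < u$i" by blast
    show ?thesis
    proof (cases "w$i \<ge> 0")
      case True
      then have "real s' * w$i \<le> real s * w$i" using that(3) by (intro mult_right_mono) auto
      then show ?thesis using i by (intro exI[of _ i]) linarith
    next
      case False
      then have "real s' * w$i < 0" using that(2) by (simp add: mult_pos_neg)
      then show ?thesis using that(1)[of i] by (intro exI[of _ i]) linarith
    qed
  qed
  have sub: "{s\<in>{1..T}. \<exists>i. real s * w$i < v$i + v'$i} \<subseteq> {1..T}" by auto
  show ?thesis
  proof (cases "m1 < T \<and> m2 < T")
    case False
    have "card {s\<in>{1..T}. \<exists>i. real s * w$i < v$i + v'$i} \<le> card {1..T}"
      by (rule card_mono[OF _ sub]) auto
    then show ?thesis using False unfolding m1_def[symmetric] m2_def[symmetric] by auto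
  next
    case True
    have n1: "\<not> (\<exists>i. real (Suc m1) * w$i < v$i)" unfolding m1_def
      by (rule dc_card) (use True dcg[of v] v in \<open>auto simp: m1_def\<close>)
    have n2: "\<not> (\<exists>i. real (Suc m2) * w$i < v'$i)" unfolding m2_def
      by (rule dc_card) (use True dcg[of v'] v' in \<open>auto simp: m2_def\<close>)
    have "{s\<in>{1..T}. \<exists>i. real s * w$i < v$i + v'$i} \<subseteq> {1..m1+m2+1}"
    proof clarify
      fix s i assume s: "s \<in> {1..T}" "real s * w$i < v$i + v'$i"
      have a1: "v$i \<le> real (Suc m1) * w$i" using n1 by (simp add: not_less)
      have a2: "v'$i \<le> real (Suc m2) * w$i" using n2 by (simp add: not_less)
      have w0: "0 \<le> w$i"
      proof (rule ccontr)
        assume "\<not> 0 \<le> w$i"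
        then have "real (Suc m1) * w$i < 0" by (simp add: mult_pos_neg)
        then show False using a1 v[of i] by linarith
      qed
      show "s \<in> {1..m1+m2+1}"
      proof (rule ccontr)
        assume "s \<notin> {1..m1+m2+1}"
        then have "real (Suc m1) + real (Suc m2) \<le> real s" using s by auto
        then have "(real (Suc m1) + real (Suc m2)) * w$i \<le> real s * w$i" using w0 by (rule mult_right_mono)
        then show False using a1 a2 s(2) by (simp add: algebra_simps)
      qed
    qed
    then have "card {s\<in>{1..T}. \<exists>i. real s * w$i < v$i + v'$i} \<le> card {1..m1+m2+1}"
      by (rule card_mono[rotated]) auto
    then show ?thesis by (simp add: m1_def m2_def)
  qed
qed


context uq begin

definition A :: "real^'d \<Rightarrow> nat \<Rightarrow> (real^'d) set" where
  "A u s = {y. \<exists>i. real s * (1 - y$i) < u$i}"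

definition cnt :: "nat \<Rightarrow> real^'d \<Rightarrow> real^'d \<Rightarrow> real" where
  "cnt T u y = real (card {s\<in>{1..T}. \<exists>i. real s * (1 - y$i) < u$i})"

lemma A_sets[simp]: "A u s \<in> sets Q"
  unfolding A_def by (rule setsQ) measurable

lemma A_int: "integrable Q (indicator (A u s) :: _ \<Rightarrow> real)"
  by (rule integrable_real_indicator) (auto simp: less_top[symmetric])

lemma cnt_sum: "cnt T u y = (\<Sum>s\<in>{1..T}. indicator (A u s) y)"
proof -
  have "(\<Sum>s\<in>{1..T}. indicator (A u s) y) = (\<Sum>s\<in>{1..T}. (of_bool (\<exists>i. real s * (1 - y$i) < u$i) :: real))"
    by (rule sum.cong) (auto simp: A_def indicator_def)
  also have "\<dots> = real (card ({1..T} \<inter> {s. \<exists>i. real s * (1 - y$i) < u$i}))"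
    by (rule sum_of_bool_eq) auto
  also have "{1..T} \<inter> {s. \<exists>i. real s * (1 - y$i) < u$i} = {s\<in>{1..T}. \<exists>i. real s * (1 - y$i) < u$i}" by auto
  finally show ?thesis unfolding cnt_def by simp
qed

lemma cnt_int: "integrable Q (cnt T u)" and cnt_integral: "(LINT y|Q. cnt T u y) = (\<Sum>s\<in>{1..T}. prob (A u s))"
proof -
  have e: "cnt T u = (\<lambda>y. \<Sum>s\<in>{1..T}. indicator (A u s) y)" using cnt_sum by auto
  show "integrable Q (cnt T u)" unfolding e by (rule Bochner_Integration.integrable_sum) (rule A_int)
  show "(LINT y|Q. cnt T u y) = (\<Sum>s\<in>{1..T}. prob (A u s))"
    unfolding e by (subst Bochner_Integration.integral_sum) (auto intro: A_int simp: spQ)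
qed

lemma sum_ineq:
  assumes v: "\<And>i. 0 \<le> v$i" and v': "\<And>i. 0 \<le> v'$i"
  shows "(\<Sum>s\<in>{1..T}. prob (A (v + v') s)) \<le> (\<Sum>s\<in>{1..T}. prob (A v s)) + (\<Sum>s\<in>{1..T}. prob (A v' s)) + 1"
proof -
  have "(LINT y|Q. cnt T (v + v') y) \<le> (LINT y|Q. cnt T v y + cnt T v' y + 1)"
  proof (rule integral_mono)
    show "integrable Q (cnt T (v + v'))" by (rule cnt_int)
    show "integrable Q (\<lambda>y. cnt T v y + cnt T v' y + 1)"
      by (intro Bochner_Integration.integrable_add cnt_int integrable_const)
    fix y
    show "cnt T (v + v') y \<le> cnt T v y + cnt T v' y + 1"
      using count_sub[OF v v', of T "\<chi> i. 1 - y$i"] unfolding cnt_def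
      by simp
  qed
  also have "\<dots> = (LINT y|Q. cnt T v y) + (LINT y|Q. cnt T v' y) + 1"
    by (subst Bochner_Integration.integral_add, (intro Bochner_Integration.integrable_add cnt_int integrable_const)+, subst Bochner_Integration.integral_add) (auto intro: cnt_int simp: prob_space)
  finally show ?thesis by (simp add: cnt_integral)
qed


lemma prob_A: assumes "0 < s" shows "prob (A v s) = 1 - mdf Q (\<chi> i. 1 - v$i / real s)"
proof -
  have "A v s = space Q - {y. \<forall>i. y$i \<le> (\<chi> i. 1 - v$i / real s)$i}"
    using assms by (auto simp: A_def spQ not_le field_simps) (metis leD)
  then have "prob (A v s) = 1 - prob {y. \<forall>i. y$i \<le> (\<chi> i. 1 - v$i / real s)$i}"
    by (simp only:) (rule prob_compl, rule S1)
  then show ?thesis unfolding mdf_def .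
qed

lemma subadd:
  assumes v: "\<And>i. 0 \<le> v$i" and v': "\<And>i. 0 \<le> v'$i"
    and l1: "(\<lambda>n. real n * (1 - mdf Q (\<chi> i. 1 - v$i / real n))) \<longlonglongrightarrow> L1"
    and l2: "(\<lambda>n. real n * (1 - mdf Q (\<chi> i. 1 - v'$i / real n))) \<longlonglongrightarrow> L2"
    and l3: "(\<lambda>n. real n * (1 - mdf Q (\<chi> i. 1 - (v + v')$i / real n))) \<longlonglongrightarrow> L3"
  shows "L3 \<le> L1 + L2"
proof (rule ccontr)
  assume "\<not> L3 \<le> L1 + L2"
  define \<delta> where "\<delta> = (L3 - L1 - L2) / 4"
  have d0: "\<delta> > 0" using \<open>\<not> L3 \<le> L1 + L2\<close> by (simp add: \<delta>_def)
  have d4: "4 * \<delta> = L3 - L1 - L2" by (simp add: \<delta>_def)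
  define r where "r s = prob (A (v + v') s) - prob (A v s) - prob (A v' s)" for s
  have e1: "eventually (\<lambda>n. real n * (1 - mdf Q (\<chi> i. 1 - v$i / real n)) < L1 + \<delta>) sequentially"
    using order_tendstoD(2)[OF l1, of "L1 + \<delta>"] d0 by simp
  have e2: "eventually (\<lambda>n. real n * (1 - mdf Q (\<chi> i. 1 - v'$i / real n)) < L2 + \<delta>) sequentially"
    using order_tendstoD(2)[OF l2, of "L2 + \<delta>"] d0 by simp
  have e3: "eventually (\<lambda>n. L3 - \<delta> < real n * (1 - mdf Q (\<chi> i. 1 - (v + v')$i / real n))) sequentially"
    using order_tendstoD(1)[OF l3, of "L3 - \<delta>"] d0 by simp
  obtain s0 where s0: "\<And>n. n \<ge> s0 \<Longrightarrow> real n * (1 - mdf Q (\<chi> i. 1 - v$i / real n)) < L1 + \<delta>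
      \<and> real n * (1 - mdf Q (\<chi> i. 1 - v'$i / real n)) < L2 + \<delta>
      \<and> L3 - \<delta> < real n * (1 - mdf Q (\<chi> i. 1 - (v + v')$i / real n))"
    using eventually_conj[OF e1 eventually_conj[OF e2 e3]] unfolding eventually_sequentially by blast
  define s1 where "s1 = max s0 1"
  define g where "g s = \<delta> / real s - (if s < s1 then 2 + \<delta> else 0)" for s
  have rg: "g s \<le> r s" if s: "s \<in> {1..T}" for s T
  proof (cases "s < s1")
    case True
    have "\<delta> / real s \<le> \<delta>" using s d0 by (simp add: divide_le_eq)
    moreover have "r s \<ge> -2" unfolding r_def using prob_le_1[of "A v s"] prob_le_1[of "A v' s"] measure_nonneg[of Q "A (v + v') s"] by linarith
    ultimately show ?thesis using True by (simp add: g_def)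
  next
    case False
    then have "s \<ge> s0" "s > 0" by (auto simp: s1_def)
    have p1: "real s * prob (A v s) < L1 + \<delta>" using s0[OF \<open>s \<ge> s0\<close>] prob_A[OF \<open>s > 0\<close>, of v] by simp
    have p2: "real s * prob (A v' s) < L2 + \<delta>" using s0[OF \<open>s \<ge> s0\<close>] prob_A[OF \<open>s > 0\<close>, of v'] by simp
    have p3: "L3 - \<delta> < real s * prob (A (v + v') s)" using s0[OF \<open>s \<ge> s0\<close>] prob_A[OF \<open>s > 0\<close>, of "v + v'"] by simp
    have "real s * r s = real s * prob (A (v + v') s) - real s * prob (A v s) - real s * prob (A v' s)"
      by (simp add: r_def algebra_simps)
    moreover have "real s * prob (A (v + v') s) - real s * prob (A v s) - real s * prob (A v' s) > \<delta>"
      using p1 p2 p3 d4 by linarith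
    ultimately have "real s * r s > \<delta>" by simp
    then have "\<delta> / real s < r s" using \<open>s > 0\<close> by (simp add: divide_less_eq mult.commute)
    then show ?thesis using False by (simp add: g_def)
  qed
  have bound: "\<delta> * harm T \<le> 1 + (2 + \<delta>) * real s1" for T
  proof -
    have "(\<Sum>s\<in>{1..T}. g s) \<le> (\<Sum>s\<in>{1..T}. r s)" by (rule sum_mono) (rule rg)
    also have "\<dots> \<le> 1"
      using sum_ineq[OF v v', of T] by (simp add: r_def sum_subtractf)
    finally have 1: "(\<Sum>s\<in>{1..T}. g s) \<le> 1" .
    have 2: "(\<Sum>s\<in>{1..T}. g s) = \<delta> * harm T - (\<Sum>s\<in>{1..T}. (if s < s1 then 2 + \<delta> else 0))"
      by (simp add: g_def sum_subtractf harm_def sum_distrib_left divide_inverse)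
    have "(\<Sum>s\<in>{1..T}. (if s < s1 then 2 + \<delta> else 0)) = (\<Sum>s\<in>{s\<in>{1..T}. s < s1}. 2 + \<delta>)"
      by (rule sum.inter_filter[symmetric]) simp
    also have "\<dots> = real (card {s\<in>{1..T}. s < s1}) * (2 + \<delta>)" by simp
    also have "\<dots> \<le> real s1 * (2 + \<delta>)"
    proof -
      have "card {s\<in>{1..T}. s < s1} \<le> card {..<s1}" by (rule card_mono) auto
      then show ?thesis using d0 by (intro mult_right_mono) auto
    qed
    finally show ?thesis using 1 2 by (simp add: mult.commute)
  qed
  have "eventually (\<lambda>T. harm T > (1 + (2 + \<delta>) * real s1) / \<delta>) sequentially"
    using harm_at_top by (simp add: filterlim_at_top_dense)
  then obtain T where "harm T > (1 + (2 + \<delta>) * real s1) / \<delta>" by (auto simp: eventually_sequentially)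
  then have "\<delta> * harm T > 1 + (2 + \<delta>) * real s1" using d0 by (simp add: divide_less_eq mult.commute)
  then show False using bound[of T] by simp
qed

end


definition cdfp :: "(real \<Rightarrow> real) \<Rightarrow> bool" where
  "cdfp F \<longleftrightarrow> mono F \<and> (F \<longlongrightarrow> 0) at_bot \<and> (F \<longlongrightarrow> 1) at_top \<and>
     (\<forall>t. continuous (at_right t) F) \<and> (\<forall>t. 0 \<le> F t \<and> F t \<le> 1)"

lemma marg_cdfp:
  assumes M: "prob_space M" and X: "X \<in> borel_measurable M"
  shows "cdfp (marg_cdf M X i)"
proof -
  have Xi: "(\<lambda>w. X w $ i) \<in> borel_measurable M" using measurable_compose[OF X, of "\<lambda>x. x$i"] by simp
  interpret real_distribution "distr M borel (\<lambda>w. X w $ i)"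
    using Xi by (rule prob_space.real_distribution_distr[OF M])
  have e: "marg_cdf M X i = cdf (distr M borel (\<lambda>w. X w $ i))"
  proof
    fix t
    have "cdf (distr M borel (\<lambda>w. X w $ i)) t = measure M ((\<lambda>w. X w $ i) -` {..t} \<inter> space M)"
      unfolding cdf_def by (rule measure_distr) (use Xi in auto)
    also have "(\<lambda>w. X w $ i) -` {..t} \<inter> space M = {w \<in> space M. X w $ i \<le> t}" by auto
    finally show "marg_cdf M X i t = cdf (distr M borel (\<lambda>w. X w $ i)) t"
      unfolding marg_cdf_def by simp
  qed
  show ?thesis unfolding cdfp_def e
    using cdf_nondecreasing cdf_lim_at_bot cdf_lim_at_top_prob cdf_is_right_cont cdf_nonneg cdf_bounded_prob
    by (auto simp: mono_def)
qed

lemma geninv_iff: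
  assumes F: "cdfp F" and q: "0 < q" "q < 1"
  shows "geninv F q \<le> s \<longleftrightarrow> q \<le> F s"
proof -
  define S where "S = {t. F t \<ge> q}"
  have mono: "mono F" using F by (simp add: cdfp_def)
  have "eventually (\<lambda>t. F t > q) at_top"
    using F q by (intro order_tendstoD(1)) (auto simp: cdfp_def)
  then obtain t0 where "F t0 > q" by (auto simp: eventually_at_top_linorder)
  then have ne: "S \<noteq> {}" by (auto simp: S_def intro!: exI[of _ t0])
  have "eventually (\<lambda>t. F t < q) at_bot"
    using F q by (intro order_tendstoD(2)) (auto simp: cdfp_def)
  then obtain b where b: "\<And>t. t \<le> b \<Longrightarrow> F t < q" by (auto simp: eventually_at_bot_linorder)
  have bdd: "bdd_below S"
    unfolding bdd_below_def S_def using b by (metis mem_Collect_eq not_le less_imp_le)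
  have FI: "q \<le> F (Inf S)"
  proof -
    have c: "(F \<longlongrightarrow> F (Inf S)) (at_right (Inf S))"
      using F by (simp add: cdfp_def continuous_within)
    have "eventually (\<lambda>t. q \<le> F t) (at_right (Inf S))"
    proof (rule eventually_at_rightI[of "Inf S" "Inf S + 1"])
      fix t assume "t \<in> {Inf S<..<Inf S + 1}"
      then have "Inf S < t" by simp
      then obtain t' where "t' \<in> S" "t' < t" using cInf_less_iff[OF ne bdd] by blast
      then show "q \<le> F t" using mono unfolding S_def mono_def by (meson less_imp_le mem_Collect_eq order_trans)
    qed simp
    then show ?thesis by (rule tendsto_lowerbound[OF c]) simp
  qed
  show ?thesis
  proof
    assume "geninv F q \<le> s"
    then have "Inf S \<le> s" by (simp add: geninv_def S_def)
    then show "q \<le> F s" using FI mono by (meson monoD order_trans)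
  next
    assume "q \<le> F s"
    then have "s \<in> S" by (simp add: S_def)
    then show "geninv F q \<le> s" unfolding geninv_def S_def[symmetric] by (rule cInf_lower[OF _ bdd])
  qed
qed

lemma geninv_meas:
  assumes F: "cdfp F"
  shows "geninv F \<in> borel_measurable borel"
proof (rule borel_measurable_piecewise_mono[of "{{..0}, {0<..<1}, {1}, {1<..}}"])
  show "countable {{..0::real}, {0<..<1}, {1}, {1<..}}" by simp
  show "\<Union> {{..0::real}, {0<..<1}, {1}, {1<..}} = UNIV"
  proof (rule set_eqI)
    fix x :: real
    have "x \<le> 0 \<or> (0 < x \<and> x < 1) \<or> x = 1 \<or> 1 < x" by linarith
    then show "x \<in> \<Union> {{..0::real}, {0<..<1}, {1}, {1<..}} \<longleftrightarrow> x \<in> UNIV" by auto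
  qed
  show "c \<in> sets borel" if "c \<in> {{..0::real}, {0<..<1}, {1}, {1<..}}" for c using that by auto
  show "mono_on c (geninv F)" if "c \<in> {{..0::real}, {0<..<1}, {1}, {1<..}}" for c
  proof -
    have F01: "0 \<le> F t" "F t \<le> 1" for t using F unfolding cdfp_def by blast+
  have eq0: "geninv F q = geninv F q'" if "q \<le> 0" "q' \<le> 0" for q q' :: real
  proof -
    have "{t. F t \<ge> q} = UNIV" using order_trans[OF that(1) F01(1)] by blast
    moreover have "{t. F t \<ge> q'} = UNIV" using order_trans[OF that(2) F01(1)] by blast
    ultimately show ?thesis by (simp add: geninv_def)
  qed
  have eq1: "geninv F q = geninv F q'" if "q > 1" "q' > 1" for q q' :: real
  proof -
    have a: "F t < q" "F t < q'" for t using F01(2)[of t] that by linarith+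
    have "{t. F t \<ge> q} = {}" "{t. F t \<ge> q'} = {}" using a leD by blast+
    then show ?thesis by (simp add: geninv_def)
  qed
  have m01: "geninv F q \<le> geninv F q'" if q: "0 < q" "q < 1" "0 < q'" "q' < 1" "q \<le> q'" for q q' :: real
  proof -
    have "q' \<le> F (geninv F q')" using geninv_iff[OF F q(3,4)] by blast
    then have "q \<le> F (geninv F q')" using q(5) by linarith
    then show ?thesis using geninv_iff[OF F q(1,2)] by blast
  qed
  have cc: "c = {..0} \<or> c = {0<..<1} \<or> c = {1} \<or> c = {1<..}" using that by simp
  show ?thesis
  proof (rule mono_onI)
    fix r s assume r: "r \<in> c" "s \<in> c" "r \<le> s"
    show "geninv F r \<le> geninv F s"
    proof -
      { assume "c = {..0}" then have ?thesis using r eq0[of r s] by simp }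
      moreover { assume "c = {0<..<1}" then have ?thesis using r m01[of r s] by simp }
      moreover { assume "c = {1}" then have ?thesis using r by simp }
      moreover { assume "c = {1<..}" then have ?thesis using r eq1[of r s] by simp }
      ultimately show ?thesis using cc by blast
    qed
  qed
  qed
qed

lemma vecm: fixes f :: "'d::finite \<Rightarrow> real \<Rightarrow> real"
  assumes "\<And>i. f i \<in> borel_measurable borel"
  shows "(\<lambda>u::real^'d. \<chi> i. f i (u$i)) \<in> borel_measurable borel"
  apply (rule borel_measurable_euclidean_space[where 'c="real^'d", THEN iffD2])
  apply (intro ballI)
  subgoal for b
  proof -
  assume "b \<in> Basis"
  then obtain i where b: "b = axis i 1" by (auto simp: Basis_vec_def)
  have "(\<lambda>x. (\<chi> i. f i (x$i)) \<bullet> b) = (\<lambda>x. f i (x$i))"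
    unfolding b by (simp add: inner_axis)
  then show "(\<lambda>x. (\<chi> i. f i (x$i)) \<bullet> b) \<in> borel_measurable borel"
    using measurable_compose[OF _ assms[of i], of "\<lambda>x. x$i"] by simp
  qed
  done


context uq begin

lemma ae01: "AE u in Q. \<forall>i. 0 < u$i \<and> u$i < 1"
proof -
  have "AE u in Q. \<forall>i\<in>UNIV. 0 < u$i \<and> u$i < 1"
  proof (rule AE_finite_allI)
    fix i :: 'd
    have s1: "{u. u$i < 1} \<in> sets Q" by (rule setsQ) measurable
    have p1: "prob {u. u$i < (1::real)} = 1"
    proof (rule ccontr)
      assume ne: "prob {u. u$i < (1::real)} \<noteq> 1"
      define p where "p = prob {u. u$i < (1::real)}"
      have "p \<le> 1" "p \<noteq> 1" using ne by (simp_all add: p_def)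
      then have p1: "p < 1" by linarith
      define \<epsilon> where "\<epsilon> = (1 - p) / 2"
      have "prob {u. u$i \<le> 1 - \<epsilon>} \<le> p"
        unfolding p_def by (rule finite_measure_mono[OF _ s1]) (use p1 in \<open>auto simp: \<epsilon>_def field_simps\<close>)
      moreover have "prob {u. u$i \<le> 1 - \<epsilon>} = 1 - \<epsilon>"
      proof (rule unif)
        have "0 \<le> p" unfolding p_def by simp
        then show "1 - \<epsilon> \<in> {0..1}" using p1 by (auto simp: \<epsilon>_def field_simps)
      qed
      ultimately show False using p1 unfolding \<epsilon>_def by (simp add: field_simps)
    qed
    have "{u. 0 < u$i \<and> u$i < 1} = {u. u$i < (1::real)} - {u. u$i \<le> 0}" by auto
    then have "prob {u. 0 < u$i \<and> u$i < 1} = 1"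
      using p1 unif[of 0 i] by (simp add: finite_measure_Diff s1 subset_eq)
    then show "AE u in Q. 0 < u$i \<and> u$i < 1"
      by (rule AE_prob_1[THEN AE_mp]) auto
  qed simp
  then show ?thesis by simp
qed

lemma copula_rep:
  fixes M :: "'a measure" and X :: "'a \<Rightarrow> real^'d"
  assumes M: "prob_space M" and X: "X \<in> borel_measurable M"
    and D: "distr Q borel (\<lambda>u. \<chi> i. geninv (marg_cdf M X i) (u $ i)) = distr M borel X"
  shows "measure M {w\<in>space M. \<forall>k\<in>K. X w$k \<le> s} = mdf Q (\<chi> i. if i\<in>K then marg_cdf M X i s else 1)"
proof -
  define F where "F i = marg_cdf M X i" for i
  define T where "T u = (\<chi> i. geninv (F i) (u $ i))" for u :: "real^'d"
  have cF: "cdfp (F i)" for i unfolding F_def by (rule marg_cdfp[OF M X])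
  have Tb: "T \<in> borel_measurable borel"
    unfolding T_def by (rule vecm) (rule geninv_meas[OF cF])
  have TQ: "T \<in> borel_measurable Q"
    using Tb measurable_cong_sets[OF sQ refl] by blast
  define B where "B = {x::real^'d. \<forall>k\<in>K. x$k \<le> s}"
  have Bb: "B \<in> sets borel" unfolding B_def by measurable
  have "measure M {w\<in>space M. \<forall>k\<in>K. X w$k \<le> s} = measure (distr M borel X) B"
    by (subst measure_distr[OF X Bb]) (auto simp: B_def intro!: arg_cong[where f="measure M"])
  also have "\<dots> = measure (distr Q borel T) B"
  proof -
    have "T = (\<lambda>u. \<chi> i. geninv (marg_cdf M X i) (u $ i))" by (simp add: T_def[abs_def] F_def)
    then show ?thesis using D by simp
  qed
  also have "\<dots> = prob (T -` B \<inter> space Q)" by (rule measure_distr[OF TQ Bb])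
  also have "\<dots> = prob {y. \<forall>i. y$i \<le> (\<chi> i. if i\<in>K then F i s else 1)$i}"
  proof (rule measure_eq_AE)
    show "T -` B \<inter> space Q \<in> sets Q" using measurable_sets[OF TQ Bb] .
    show "{y. \<forall>i. y$i \<le> (\<chi> i. if i\<in>K then F i s else 1)$i} \<in> sets Q" by (rule S1)
    show "AE x in Q. (x \<in> T -` B \<inter> space Q) \<longleftrightarrow> (x \<in> {y. \<forall>i. y$i \<le> (\<chi> i. if i\<in>K then F i s else 1)$i})"
      using ae01
    proof (rule AE_mp, intro AE_I2 impI)
      fix x :: "real^'d" assume x: "\<forall>i. 0 < x$i \<and> x$i < 1"
      have "x \<in> T -` B \<inter> space Q \<longleftrightarrow> (\<forall>k\<in>K. x$k \<le> F k s)"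
        using geninv_iff[OF cF] x by (auto simp: T_def B_def spQ)
      also have "\<dots> \<longleftrightarrow> (\<forall>i. x$i \<le> (\<chi> i. if i\<in>K then F i s else 1)$i)"
        using x by (auto simp: less_imp_le)
      finally show "(x \<in> T -` B \<inter> space Q) \<longleftrightarrow> (x \<in> {y. \<forall>i. y$i \<le> (\<chi> i. if i\<in>K then F i s else 1)$i})"
        by simp
    qed
  qed
  finally show ?thesis unfolding mdf_def F_def .
qed

end


locale uqd = uq Q for Q :: "(real^'d) measure" +
  fixes G :: "real^'d \<Rightarrow> real"
  assumes doa: "in_doa (mdf Q) G"
begin

definition Lf :: "real^'d \<Rightarrow> real" where "Lf v = - ln (G (\<chi> i. - v$i))"

lemma L_seq: "(\<And>i. 0 \<le> v$i) \<Longrightarrow> (\<lambda>n. real n * (1 - mdf Q (\<chi> i. 1 - v$i / real n))) \<longlonglongrightarrow> Lf v"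
  unfolding Lf_def by (rule seq_lim(2)[OF doa])

lemma L_real: "(\<And>i. 0 \<le> v$i) \<Longrightarrow> ((\<lambda>e. (1 - mdf Q (\<chi> i. 1 - e * v$i)) / e) \<longlongrightarrow> Lf v) (at_right 0)"
  by (rule rlim[OF _ L_seq])

lemma L_nonneg: assumes "\<And>i. 0 \<le> v$i" shows "0 \<le> Lf v"
proof (rule LIMSEQ_le_const[OF L_seq[OF assms]])
  show "\<exists>N. \<forall>n\<ge>N. 0 \<le> real n * (1 - mdf Q (\<chi> i. 1 - v$i / real n))"
    using mdf_le1 by (auto intro!: exI[of _ 0])
qed

lemma L_ge: assumes v: "\<And>i. 0 \<le> v$i" shows "v$j \<le> Lf v"
proof (rule LIMSEQ_le_const[OF L_seq[OF assms]])
  obtain N :: nat where N: "real N > v$j + 1" using reals_Archimedean2 by blast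
  show "\<exists>N. \<forall>n\<ge>N. v$j \<le> real n * (1 - mdf Q (\<chi> i. 1 - v$i / real n))"
  proof (intro exI allI impI)
    fix n assume "N \<le> n"
    then have n: "real n > v$j + 1" using N by linarith
    have vj: "0 \<le> v$j / real n" "v$j / real n \<le> 1" using v[of j] n by (auto simp: field_simps)
    have "mdf Q (\<chi> i. 1 - v$i / real n) \<le> (\<chi> i. 1 - v$i / real n)$j"
      by (rule mdf_le) (use vj in auto)
    then have "v$j / real n \<le> 1 - mdf Q (\<chi> i. 1 - v$i / real n)" by simp
    then have "real n * (v$j / real n) \<le> real n * (1 - mdf Q (\<chi> i. 1 - v$i / real n))"
      by (rule mult_left_mono) simp
    then show "v$j \<le> real n * (1 - mdf Q (\<chi> i. 1 - v$i / real n))" using n v[of j] by simp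
  qed
qed

lemma mdf_one: "mdf Q (\<chi> i. 1) = 1"
  using mdf_ge[of "\<chi> i. 1"] mdf_le1[of "\<chi> i. 1"] by simp

lemma L_zero: "Lf 0 = 0"
proof -
  have "(\<lambda>n. real n * (1 - mdf Q (\<chi> i. 1 - (0::real^'d)$i / real n))) \<longlonglongrightarrow> Lf 0"
    by (rule L_seq) simp
  moreover have "(\<lambda>n. real n * (1 - mdf Q (\<chi> i. 1 - (0::real^'d)$i / real n))) = (\<lambda>n. 0)"
    using mdf_one by simp
  ultimately show ?thesis using LIMSEQ_unique by (metis tendsto_const)
qed

lemma L_mono: assumes v: "\<And>i. 0 \<le> v$i" and vw: "\<And>i. v$i \<le> w$i" shows "Lf v \<le> Lf w"
proof (rule LIMSEQ_le[OF L_seq[OF v] L_seq])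
  show "0 \<le> w$i" for i using v[of i] vw[of i] by linarith
  show "\<exists>N. \<forall>n\<ge>N. real n * (1 - mdf Q (\<chi> i. 1 - v$i / real n)) \<le> real n * (1 - mdf Q (\<chi> i. 1 - w$i / real n))"
  proof (intro exI[of _ 0] allI impI mult_left_mono)
    fix n :: nat
    have "mdf Q (\<chi> i. 1 - w$i / real n) \<le> mdf Q (\<chi> i. 1 - v$i / real n)"
      by (rule mdf_mono) (simp add: divide_right_mono vw)
    then show "1 - mdf Q (\<chi> i. 1 - v$i / real n) \<le> 1 - mdf Q (\<chi> i. 1 - w$i / real n)" by simp
  qed simp
qed

lemma L_hom: assumes v: "\<And>i. 0 \<le> v$i" and c: "0 \<le> c" shows "Lf (c *\<^sub>R v) = c * Lf v"
proof (cases "c = 0")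
  case True then show ?thesis by (simp add: L_zero)
next
  case False
  with c have c0: "c > 0" by simp
  have cv: "0 \<le> (c *\<^sub>R v)$i" for i using v[of i] c by simp
  have l1: "((\<lambda>e. (1 - mdf Q (\<chi> i. 1 - e * (c *\<^sub>R v)$i)) / e) \<longlongrightarrow> Lf (c *\<^sub>R v)) (at_right 0)"
    by (rule L_real[OF cv])
  have f: "filterlim (\<lambda>e. c * e) (at_right 0) (at_right (0::real))"
  proof (rule filterlim_at_withinI)
    show "((\<lambda>e. c * e) \<longlongrightarrow> 0) (at_right 0)"
      using tendsto_mult[OF tendsto_const[of c] tendsto_ident_at[of 0 "{0<..}"]] by simp
    show "\<forall>\<^sub>F x in at_right 0. c * x \<in> {0<..} - {0}"
      using eventually_at_right_less[of 0] by eventually_elim (use c0 in simp)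
  qed
  have l2: "((\<lambda>e. c * ((1 - mdf Q (\<chi> i. 1 - (c * e) * v$i)) / (c * e))) \<longlongrightarrow> c * Lf v) (at_right 0)"
    by (rule tendsto_mult[OF tendsto_const filterlim_compose[OF L_real[OF v] f]])
  have "(\<lambda>e. c * ((1 - mdf Q (\<chi> i. 1 - (c * e) * v$i)) / (c * e))) = (\<lambda>e. (1 - mdf Q (\<chi> i. 1 - e * (c *\<^sub>R v)$i)) / e)"
  proof
    fix e
    have "(\<chi> i. 1 - (c * e) * v$i) = (\<chi> i. 1 - e * (c *\<^sub>R v)$i)" by (simp add: mult_ac)
    moreover have "c * (A / (c * e)) = A / e" for A using c0 by simp
    ultimately show "c * ((1 - mdf Q (\<chi> i. 1 - (c * e) * v$i)) / (c * e)) = (1 - mdf Q (\<chi> i. 1 - e * (c *\<^sub>R v)$i)) / e"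
      by simp
  qed
  with l2 have "((\<lambda>e. (1 - mdf Q (\<chi> i. 1 - e * (c *\<^sub>R v)$i)) / e) \<longlongrightarrow> c * Lf v) (at_right 0)" by simp
  from tendsto_unique[OF _ l1 this] show ?thesis by simp
qed

lemma L_sub: assumes v: "\<And>i. 0 \<le> v$i" and w: "\<And>i. 0 \<le> w$i" shows "Lf (v + w) \<le> Lf v + Lf w"
proof (rule subadd[OF v w L_seq[OF v] L_seq[OF w]])
  show "(\<lambda>n. real n * (1 - mdf Q (\<chi> i. 1 - (v + w)$i / real n))) \<longlonglongrightarrow> Lf (v + w)"
    by (rule L_seq) (simp add: v w add_nonneg_nonneg)
qed

lemma L_axis: "Lf (axis j 1) = 1"
proof -
  have "(\<lambda>n. real n * (1 - mdf Q (\<chi> i. 1 - (axis j 1 :: real^'d)$i / real n))) \<longlonglongrightarrow> Lf (axis j 1)"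
    by (rule L_seq) (simp add: axis_def)
  moreover have "eventually (\<lambda>n. real n * (1 - mdf Q (\<chi> i. 1 - (axis j 1 :: real^'d)$i / real n)) = 1) sequentially"
    using eventually_gt_at_top[of 0]
  proof eventually_elim
    case (elim n)
    define u :: "real^'d" where "u = (\<chi> i. 1 - (axis j 1 :: real^'d)$i / real n)"
    have u01: "0 \<le> u$i \<and> u$i \<le> 1" for i using elim by (auto simp: u_def axis_def)
    have "mdf Q u \<le> u$j" by (rule mdf_le) (use u01 in auto)
    moreover have "mdf Q u \<ge> 1 - (\<Sum>i\<in>UNIV. 1 - u$i)" by (rule mdf_ge) (use u01 in auto)
    moreover have "(\<Sum>i\<in>UNIV. 1 - u$i) = 1 / real n"
    proof -
      have "(\<Sum>i\<in>UNIV. 1 - u$i) = (\<Sum>i\<in>UNIV. if i = j then 1 / real n else 0)"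
        by (rule sum.cong) (auto simp: u_def axis_def)
      then show ?thesis by simp
    qed
    moreover have "u$j = 1 - 1 / real n" by (simp add: u_def axis_def)
    ultimately have "mdf Q u = 1 - 1 / real n" by linarith
    then show ?case using elim unfolding u_def[symmetric] by simp
  qed
  ultimately have "(\<lambda>n. 1::real) \<longlonglongrightarrow> Lf (axis j 1)" by (rule Lim_transform_eventually)
  then show ?thesis using LIMSEQ_unique tendsto_const by metis
qed

definition Nf :: "real^'d \<Rightarrow> real" where "Nf x = Lf (\<chi> i. \<bar>x$i\<bar>)"

lemma Nf_norm: "is_norm Nf"
  unfolding is_norm_def
proof (intro conjI allI)
  fix x :: "real^'d"
  show "0 \<le> Nf x" unfolding Nf_def by (rule L_nonneg) simp
  show "Nf x = 0 \<longleftrightarrow> x = 0"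
  proof
    assume "Nf x = 0"
    then have "\<bar>x$i\<bar> \<le> 0" for i using L_ge[of "\<chi> i. \<bar>x$i\<bar>" i] by (simp add: Nf_def)
    then show "x = 0" by (simp add: vec_eq_iff)
  next
    assume "x = 0"
    then show "Nf x = 0" unfolding Nf_def using L_zero by (simp add: zero_vec_def)
  qed
  fix c :: real
  have "(\<chi> i. \<bar>(c *\<^sub>R x)$i\<bar>) = \<bar>c\<bar> *\<^sub>R (\<chi> i. \<bar>x$i\<bar>)" by (simp add: vec_eq_iff abs_mult)
  then show "Nf (c *\<^sub>R x) = \<bar>c\<bar> * Nf x" unfolding Nf_def by (simp add: L_hom)
next
  fix x y :: "real^'d"
  have "Nf (x + y) \<le> Lf ((\<chi> i. \<bar>x$i\<bar>) + (\<chi> i. \<bar>y$i\<bar>))"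
    unfolding Nf_def by (rule L_mono) (auto simp: abs_triangle_ineq)
  also have "\<dots> \<le> Nf x + Nf y" unfolding Nf_def by (rule L_sub) auto
  finally show "Nf (x + y) \<le> Nf x + Nf y" .
qed

lemma Nf_axis: "Nf (axis j 1) = 1"
proof -
  have "(\<chi> i. \<bar>(axis j 1 :: real^'d)$i\<bar>) = axis j 1" by (simp add: vec_eq_iff axis_def)
  then show ?thesis by (simp add: Nf_def L_axis)
qed

end


context uqd begin

lemma caseA:
  fixes M :: "'a measure" and X :: "'a \<Rightarrow> real^'d" and \<kappa> :: 'd and \<gamma> :: "'d \<Rightarrow> real" and Fl :: "real filter"
  assumes M: "prob_space M" and X: "X \<in> borel_measurable M"
    and D: "distr Q borel (\<lambda>u. \<chi> i. geninv (marg_cdf M X i) (u $ i)) = distr M borel X"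
    and gpos: "eventually (\<lambda>s. 1 - marg_cdf M X \<kappa> s > 0) Fl"
    and g0: "((\<lambda>s. 1 - marg_cdf M X \<kappa> s) \<longlongrightarrow> 0) Fl"
    and rat: "\<forall>i. \<gamma> i \<ge> 0 \<and> ((\<lambda>s. (1 - marg_cdf M X i s) / (1 - marg_cdf M X \<kappa> s)) \<longlongrightarrow> \<gamma> i) Fl"
    and K: "K \<noteq> {}"
  shows "(\<lambda>s. measure M {w \<in> space M. \<forall>k\<in>K. X w $ k \<le> s}
             - (1 - (1 - marg_cdf M X \<kappa> s) * Nf (\<Sum>k\<in>K. \<gamma> k *\<^sub>R axis k 1)))
      \<in> o[Fl](\<lambda>s. 1 - marg_cdf M X \<kappa> s)"
proof -
  define F where "F i = marg_cdf M X i" for i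
  define g where "g s = 1 - F \<kappa> s" for s
  define v :: "real^'d" where "v = (\<Sum>k\<in>K. \<gamma> k *\<^sub>R axis k 1)"
  have vc: "v$i = (if i \<in> K then \<gamma> i else 0)" for i
    unfolding v_def by (simp add: sum_component axis_def if_distrib cong: if_cong)
  have v0: "0 \<le> v$i" for i using rat by (simp add: vc)
  have Nv: "Nf v = Lf v"
  proof -
    have "(\<chi> i. \<bar>v$i\<bar>) = v" using v0 by (simp add: vec_eq_iff)
    then show ?thesis by (simp add: Nf_def)
  qed
  define u where "u s = (\<chi> i. if i\<in>K then F i s else 1)" for s
  have P: "measure M {w \<in> space M. \<forall>k\<in>K. X w $ k \<le> s} = mdf Q (u s)" for s
    unfolding u_def F_def by (rule copula_rep[OF M X D])
  have cF: "cdfp (F i)" for i unfolding F_def by (rule marg_cdfp[OF M X])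
  have F01: "0 \<le> F i s \<and> F i s \<le> 1" for i s using cF[of i] unfolding cdfp_def by blast
  define T1 where "T1 s = (1 - mdf Q (\<chi> i. 1 - g s * v$i)) / g s" for s
  define T2 where "T2 s = (mdf Q (\<chi> i. 1 - g s * v$i) - mdf Q (u s)) / g s" for s
  have gl: "filterlim g (at_right 0) Fl"
    by (rule tendsto_imp_filterlim_at_right) (use g0 gpos in \<open>simp_all add: g_def[abs_def] F_def\<close>)
  have T1l: "(T1 \<longlongrightarrow> Lf v) Fl"
    unfolding T1_def by (rule filterlim_compose[OF L_real[OF v0] gl])
  have T2l: "(T2 \<longlongrightarrow> 0) Fl"
  proof (rule Lim_null_comparison)
    define R where "R s = (\<Sum>i\<in>UNIV. if i \<in> K then \<bar>(1 - F i s) / g s - \<gamma> i\<bar> else 0)" for s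
    show "(R \<longlongrightarrow> 0) Fl"
    proof -
      have "((\<lambda>s. \<Sum>i\<in>UNIV. if i \<in> K then \<bar>(1 - F i s) / g s - \<gamma> i\<bar> else 0) \<longlongrightarrow> (\<Sum>i\<in>(UNIV::'d set). 0)) Fl"
      proof (rule tendsto_sum)
        fix i :: 'd
        have "((\<lambda>s. (1 - F i s) / g s - \<gamma> i) \<longlongrightarrow> 0) Fl"
          using tendsto_diff[OF conjunct2[OF rat[rule_format, of i]] tendsto_const[of "\<gamma> i"]]
          by (simp add: F_def g_def)
        then have "((\<lambda>s. \<bar>(1 - F i s) / g s - \<gamma> i\<bar>) \<longlongrightarrow> 0) Fl" by (rule tendsto_rabs_zero)
        then show "((\<lambda>s. if i \<in> K then \<bar>(1 - F i s) / g s - \<gamma> i\<bar> else 0) \<longlongrightarrow> 0) Fl" by (cases "i \<in> K") simp_all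
      qed
      then show ?thesis by (simp add: R_def[abs_def])
    qed
    have ev1: "eventually (\<lambda>s. \<forall>i. g s * v$i \<le> 1) Fl"
    proof (rule eventually_all_finite)
      fix i
      have "((\<lambda>s. g s * v$i) \<longlongrightarrow> 0 * v$i) Fl" by (rule tendsto_mult[OF _ tendsto_const]) (use g0 in \<open>simp add: g_def F_def\<close>)
      then show "eventually (\<lambda>s. g s * v$i \<le> 1) Fl"
        by (intro eventually_mono[OF order_tendstoD(2)[of _ 0 Fl 1]]) auto
    qed
    show "eventually (\<lambda>s. norm (T2 s) \<le> R s) Fl"
      using ev1 gpos
    proof eventually_elim
      case (elim s)
      have gp: "g s > 0" using elim(2) by (simp add: g_def F_def)
      have a: "0 \<le> (\<chi> i. 1 - g s * v$i)$i \<and> (\<chi> i. 1 - g s * v$i)$i \<le> 1" for i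
        using elim(1) gp v0[of i] by simp
      have b: "0 \<le> (u s)$i \<and> (u s)$i \<le> 1" for i using F01 by (simp add: u_def)
      have "\<bar>mdf Q (\<chi> i. 1 - g s * v$i) - mdf Q (u s)\<bar> \<le> (\<Sum>i\<in>UNIV. \<bar>(\<chi> i. 1 - g s * v$i)$i - (u s)$i\<bar>)"
        by (rule mdf_lip[OF a b])
      also have "\<dots> = (\<Sum>i\<in>UNIV. if i \<in> K then \<bar>(1 - F i s) - g s * \<gamma> i\<bar> else 0)"
        by (rule sum.cong) (auto simp: u_def vc abs_minus_commute)
      also have "\<dots> = g s * R s"
        unfolding R_def sum_distrib_left
      proof (rule sum.cong)
        fix i
        have "g s * ((1 - F i s) / g s - \<gamma> i) = (1 - F i s) - g s * \<gamma> i"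
        proof -
          have "\<And>a b c::real. c \<noteq> 0 \<Longrightarrow> c * (a / c - b) = a - c * b" by (simp add: field_simps)
          then show ?thesis using gp by simp
        qed
        then have "\<bar>(1 - F i s) - g s * \<gamma> i\<bar> = \<bar>g s * ((1 - F i s) / g s - \<gamma> i)\<bar>" by simp
        also have "\<dots> = g s * \<bar>(1 - F i s) / g s - \<gamma> i\<bar>" using gp by (simp add: abs_mult)
        finally show "(if i \<in> K then \<bar>(1 - F i s) - g s * \<gamma> i\<bar> else 0) = g s * (if i \<in> K then \<bar>(1 - F i s) / g s - \<gamma> i\<bar> else 0)"
          by simp
      qed simp
      finally have "\<bar>mdf Q (\<chi> i. 1 - g s * v$i) - mdf Q (u s)\<bar> \<le> g s * R s" .
      then show "norm (T2 s) \<le> R s" using gp by (simp add: T2_def abs_divide divide_le_eq mult.commute)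
    qed
  qed
  have lim: "((\<lambda>s. Lf v - (T1 s + T2 s)) \<longlongrightarrow> 0) Fl"
    using tendsto_diff[OF tendsto_const[of "Lf v"] tendsto_add[OF T1l T2l]] by simp
  have "((\<lambda>s. (measure M {w \<in> space M. \<forall>k\<in>K. X w $ k \<le> s} - (1 - g s * Nf v)) / g s) \<longlongrightarrow> 0) Fl"
  proof (rule Lim_transform_eventually[OF lim])
    show "eventually (\<lambda>s. Lf v - (T1 s + T2 s) = (measure M {w \<in> space M. \<forall>k\<in>K. X w $ k \<le> s} - (1 - g s * Nf v)) / g s) Fl"
      using gpos
    proof eventually_elim
      case (elim s)
      have gp: "g s > 0" using elim by (simp add: g_def F_def)
      show ?case unfolding P T1_def T2_def Nv using gp by (simp add: field_simps)
    qed
  qed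
  then show ?thesis
    by (intro smalloI_tendsto) (use gpos in \<open>auto simp: g_def F_def v_def elim: eventually_mono\<close>)
qed

end


lemma cdf_left:
  fixes Y :: "'a \<Rightarrow> real"
  assumes M: "prob_space M" and Y: "Y \<in> borel_measurable M"
  shows "((\<lambda>s. measure M {w\<in>space M. Y w \<le> s}) \<longlongrightarrow> measure M {w\<in>space M. Y w < r}) (at_left r)"
proof -
  interpret real_distribution "distr M borel Y"
    using Y by (rule prob_space.real_distribution_distr[OF M])
  have e1: "cdf (distr M borel Y) s = measure M {w\<in>space M. Y w \<le> s}" for s
  proof -
    have "cdf (distr M borel Y) s = measure M (Y -` {..s} \<inter> space M)"
      unfolding cdf_def by (rule measure_distr) (use Y in auto)
    also have "Y -` {..s} \<inter> space M = {w\<in>space M. Y w \<le> s}" by auto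
    finally show ?thesis .
  qed
  have e2: "measure (distr M borel Y) {..<r} = measure M {w\<in>space M. Y w < r}"
  proof -
    have "measure (distr M borel Y) {..<r} = measure M (Y -` {..<r} \<inter> space M)"
      by (rule measure_distr) (use Y in auto)
    also have "Y -` {..<r} \<inter> space M = {w\<in>space M. Y w < r}" by auto
    finally show ?thesis .
  qed
  show ?thesis using cdf_at_left[of r] unfolding e2 by (simp add: e1[abs_def])
qed

lemma ue_less: assumes "ereal s < upper_endpoint F" "mono F" shows "F s < 1"
proof -
  from assms(1) obtain t where "F t < 1" "ereal s < ereal t"
    unfolding upper_endpoint_def less_Sup_iff by auto
  then have "s \<le> t" by simp
  then have "F s \<le> F t" by (rule monoD[OF assms(2)])
  then show ?thesis using \<open>F t < 1\<close> by linarith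
qed

lemma ue_ne: assumes "cdfp F" shows "upper_endpoint F \<noteq> -\<infinity>"
proof -
  have "eventually (\<lambda>t. F t < 1) at_bot"
    using assms by (intro order_tendstoD(2)) (auto simp: cdfp_def)
  then obtain t where "F t < 1" by (auto simp: eventually_at_bot_linorder)
  then have "ereal t \<le> upper_endpoint F" unfolding upper_endpoint_def by (auto intro: Sup_upper)
  then show ?thesis by auto
qed

lemma ue_ev: assumes "cdfp F"
  shows "eventually (\<lambda>s. F s < 1) (up_to (upper_endpoint F))"
proof -
  have mono: "mono F" using assms by (simp add: cdfp_def)
  have "eventually (\<lambda>s. ereal s < upper_endpoint F) (up_to (upper_endpoint F))"
  proof (cases "upper_endpoint F")
    case (real r)
    then show ?thesis unfolding up_to_def
      by (simp, intro eventually_at_leftI[of "r - 1"]) auto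
  next
    case PInf
    then show ?thesis by (simp add: up_to_def)
  next
    case MInf
    then show ?thesis using ue_ne[OF assms] by simp
  qed
  then show ?thesis by (rule eventually_mono) (rule ue_less[OF _ mono])
qed


locale bn = prob_space M for M :: "'a measure" +
  fixes A :: "'d::finite \<Rightarrow> 'a set"
  assumes A: "\<And>k. A k \<in> sets M"
begin

definition m where "m k = measure M (A k)"
definition Z :: "'d \<Rightarrow> 'a \<Rightarrow> real" where
  "Z k w = (if m k = 0 then 1 else indicator (A k) w / m k)"
definition h :: "real^'d \<Rightarrow> 'a \<Rightarrow> real" where
  "h x w = Max (range (\<lambda>k. \<bar>x$k\<bar> * Z k w))"
definition Nb :: "real^'d \<Rightarrow> real" where
  "Nb x = (LINT w|M. h x w)"

lemma m_nonneg: "0 \<le> m k" unfolding m_def by simp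

lemma Z_nonneg: "0 \<le> Z k w" unfolding Z_def using m_nonneg[of k] by auto

lemma Z_meas[measurable]: "Z k \<in> borel_measurable M"
  unfolding Z_def[abs_def] using A[of k] by measurable

lemma Z_int: "integrable M (Z k)"
proof (cases "m k = 0")
  case True then show ?thesis by (simp add: Z_def[abs_def])
next
  case False
  have "integrable M (\<lambda>w. indicator (A k) w / m k :: real)"
    by (intro integrable_divide integrable_real_indicator A) (auto simp: less_top[symmetric])
  then show ?thesis using False by (simp add: Z_def[abs_def])
qed

lemma Z_integral: "(LINT w|M. Z k w) = 1"
proof (cases "m k = 0")
  case True then show ?thesis by (simp add: Z_def prob_space)
next
  case False
  have "(LINT w|M. Z k w) = (LINT w|M. indicator (A k) w / m k)" using False by (simp add: Z_def)
  also have "\<dots> = measure M (A k) / m k" using A[of k] by simp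
  finally show ?thesis using False by (simp add: m_def)
qed

lemma h_ge: "\<bar>x$k\<bar> * Z k w \<le> h x w"
  unfolding h_def by (rule Max_ge) auto

lemma h_nonneg: "0 \<le> h x w"
  using h_ge[of x undefined w] Z_nonneg[of undefined w] by (meson mult_nonneg_nonneg abs_ge_zero order_trans)

lemma h_le_sum: "h x w \<le> (\<Sum>k\<in>UNIV. \<bar>x$k\<bar> * Z k w)"
  unfolding h_def
proof (subst Max_le_iff, simp, simp, intro ballI)
  fix y assume "y \<in> range (\<lambda>k. \<bar>x$k\<bar> * Z k w)"
  then obtain k where "y = \<bar>x$k\<bar> * Z k w" by auto
  have "\<bar>x$k\<bar> * Z k w \<le> (\<Sum>k\<in>UNIV. \<bar>x$k\<bar> * Z k w)"
    by (rule member_le_sum) (auto intro: mult_nonneg_nonneg Z_nonneg)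
  then show "y \<le> (\<Sum>k\<in>UNIV. \<bar>x$k\<bar> * Z k w)" using \<open>y = _\<close> by simp
qed

lemma h_meas[measurable]: "h x \<in> borel_measurable M"
  unfolding h_def[abs_def] by measurable

lemma h_int: "integrable M (h x)"
proof (rule Bochner_Integration.integrable_bound)
  show "integrable M (\<lambda>w. \<Sum>k\<in>UNIV. \<bar>x$k\<bar> * Z k w)"
    by (intro Bochner_Integration.integrable_sum integrable_mult_right Z_int)
  show "h x \<in> borel_measurable M" by measurable
  show "AE w in M. norm (h x w) \<le> norm (\<Sum>k\<in>UNIV. \<bar>x$k\<bar> * Z k w)"
    using h_le_sum h_nonneg order_trans[OF h_nonneg h_le_sum] by auto
qed

lemma h_scale: "h (c *\<^sub>R x) w = \<bar>c\<bar> * h x w"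
proof -
  have "range (\<lambda>k. \<bar>(c *\<^sub>R x)$k\<bar> * Z k w) = (\<lambda>t. \<bar>c\<bar> * t) ` range (\<lambda>k. \<bar>x$k\<bar> * Z k w)"
    by (auto simp: abs_mult mult.assoc image_iff)
  moreover have "(\<lambda>t. \<bar>c\<bar> * t) (Max (range (\<lambda>k. \<bar>x$k\<bar> * Z k w))) = Max ((\<lambda>t. \<bar>c\<bar> * t) ` range (\<lambda>k. \<bar>x$k\<bar> * Z k w))"
    by (rule mono_Max_commute) (auto simp: mono_def mult_left_mono)
  ultimately show ?thesis by (simp add: h_def)
qed

lemma h_add: "h (x + y) w \<le> h x w + h y w"
  unfolding h_def[of "x + y"]
proof (subst Max_le_iff, simp, simp, intro ballI)
  fix t assume "t \<in> range (\<lambda>k. \<bar>(x + y)$k\<bar> * Z k w)"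
  then obtain k where k: "t = \<bar>(x + y)$k\<bar> * Z k w" by auto
  have "\<bar>(x + y)$k\<bar> * Z k w \<le> (\<bar>x$k\<bar> + \<bar>y$k\<bar>) * Z k w"
    by (intro mult_right_mono Z_nonneg) (simp add: abs_triangle_ineq)
  also have "\<dots> = \<bar>x$k\<bar> * Z k w + \<bar>y$k\<bar> * Z k w" by (simp add: algebra_simps)
  also have "\<dots> \<le> h x w + h y w" by (intro add_mono h_ge)
  finally show "t \<le> h x w + h y w" using k by simp
qed

lemma h_zero: "h 0 w = 0"
  unfolding h_def by simp

lemma Nb_ge: "\<bar>x$k\<bar> \<le> Nb x"
proof -
  have "(LINT w|M. \<bar>x$k\<bar> * Z k w) \<le> Nb x"
    unfolding Nb_def by (rule integral_mono) (auto intro: h_int Z_int h_ge)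
  then show ?thesis by (simp add: Z_integral)
qed

lemma Nb_norm: "is_norm Nb"
  unfolding is_norm_def
proof (intro conjI allI)
  fix x :: "real^'d"
  show "0 \<le> Nb x" unfolding Nb_def by (rule integral_nonneg_AE) (simp add: h_nonneg)
  show "Nb x = 0 \<longleftrightarrow> x = 0"
  proof
    assume "Nb x = 0"
    then have "\<bar>x$k\<bar> \<le> 0" for k using Nb_ge[of x k] by simp
    then show "x = 0" by (simp add: vec_eq_iff)
  next
    assume "x = 0" then show "Nb x = 0" by (simp add: Nb_def h_zero)
  qed
  fix c :: real
  show "Nb (c *\<^sub>R x) = \<bar>c\<bar> * Nb x" by (simp add: Nb_def h_scale)
next
  fix x y :: "real^'d"
  have "Nb (x + y) \<le> (LINT w|M. h x w + h y w)"
    unfolding Nb_def by (rule integral_mono) (auto intro: h_int h_add)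
  also have "\<dots> = Nb x + Nb y" unfolding Nb_def by (rule Bochner_Integration.integral_add) (auto intro: h_int)
  finally show "Nb (x + y) \<le> Nb x + Nb y" .
qed

lemma Nb_axis: "Nb (axis j 1) = 1"
proof -
  have "h (axis j 1) w = Z j w" for w
    unfolding h_def
  proof (rule Max_eqI)
    show "Z j w \<in> range (\<lambda>k. \<bar>(axis j 1 :: real^'d)$k\<bar> * Z k w)"
      by (auto simp: axis_def image_iff intro!: exI[of _ j])
  qed (auto simp: axis_def Z_nonneg)
  then show ?thesis by (simp add: Nb_def Z_integral)
qed

lemma Nb_gamma:
  assumes c: "0 < c" and x: "\<And>k. x$k = (if k \<in> K then m k / c else 0)"
  shows "Nb x = measure M (\<Union>k\<in>K. A k) / c"
proof -
  define U where "U = (\<Union>k\<in>{k\<in>K. m k \<noteq> 0}. A k)"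
  have U: "U \<in> sets M" unfolding U_def using A by auto
  have hx: "h x w = indicator U w / c" for w
    unfolding h_def
  proof (rule Max_eqI)
    have t: "\<bar>x$k\<bar> * Z k w = (if k \<in> K \<and> m k \<noteq> 0 \<and> w \<in> A k then 1 / c else 0)" for k
      using c m_nonneg[of k] by (auto simp: x Z_def)
    show "finite (range (\<lambda>k. \<bar>x$k\<bar> * Z k w))" by simp
    show "y \<le> indicator U w / c" if "y \<in> range (\<lambda>k. \<bar>x$k\<bar> * Z k w)" for y
      using that c by (auto simp: t U_def indicator_def)
    show "indicator U w / c \<in> range (\<lambda>k. \<bar>x$k\<bar> * Z k w)"
    proof (cases "w \<in> U")
      case True
      then obtain k where "k \<in> K" "m k \<noteq> 0" "w \<in> A k" by (auto simp: U_def)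
      then show ?thesis using True by (auto simp: t image_iff intro!: exI[of _ k])
    next
      case False
      have "\<bar>x$k\<bar> * Z k w = 0" for k using False by (auto simp: t U_def)
      then show ?thesis using False by (auto simp: image_iff)
    qed
  qed
  have "Nb x = measure M U / c" using U by (simp add: Nb_def hx)
  also have "measure M U = measure M (\<Union>k\<in>K. A k)"
  proof (rule antisym)
    show "measure M U \<le> measure M (\<Union>k\<in>K. A k)"
      unfolding U_def by (rule finite_measure_mono) (use A in auto)
    have "(\<Union>k\<in>K. A k) \<subseteq> U \<union> (\<Union>k\<in>{k\<in>K. m k = 0}. A k)" by (auto simp: U_def)
    then have "measure M (\<Union>k\<in>K. A k) \<le> measure M (U \<union> (\<Union>k\<in>{k\<in>K. m k = 0}. A k))"
      by (rule finite_measure_mono) (use A U in auto)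
    also have "\<dots> \<le> measure M U + measure M (\<Union>k\<in>{k\<in>K. m k = 0}. A k)"
      by (rule measure_Un_le) (use A U in auto)
    also have "measure M (\<Union>k\<in>{k\<in>K. m k = 0}. A k) \<le> (\<Sum>k\<in>{k\<in>K. m k = 0}. measure M (A k))"
      by (rule finite_measure_subadditive_finite) (use A in auto)
    also have "\<dots> = 0" by (simp add: m_def[symmetric])
    finally show "measure M (\<Union>k\<in>K. A k) \<le> measure M U" by simp
  qed
  finally show ?thesis .
qed

end


lemma caseB:
  fixes M :: "'a measure" and X :: "'a \<Rightarrow> real^'d" and \<kappa> :: 'd and \<gamma> :: "'d \<Rightarrow> real"
  assumes M: "prob_space M" and X: "X \<in> borel_measurable M"
    and c: "c = 1 - measure M {w\<in>space M. X w $ \<kappa> < r}" "c > 0"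
    and rat: "\<forall>i. \<gamma> i \<ge> 0 \<and> ((\<lambda>s. (1 - marg_cdf M X i s) / (1 - marg_cdf M X \<kappa> s)) \<longlongrightarrow> \<gamma> i) (at_left r)"
  shows "\<exists>N. is_norm N \<and> (\<forall>i. N (axis i 1) = 1) \<and>
    (\<forall>K. K \<noteq> {} \<longrightarrow>
      (\<lambda>s. measure M {w \<in> space M. \<forall>k\<in>K. X w $ k \<le> s}
             - (1 - (1 - marg_cdf M X \<kappa> s) * N (\<Sum>k\<in>K. \<gamma> k *\<^sub>R axis k 1)))
      \<in> o[at_left r](\<lambda>s. 1 - marg_cdf M X \<kappa> s))"
proof -
  interpret P: prob_space M by (rule M)
  define A where "A k = {w\<in>space M. r \<le> X w $ k}" for k
  have Xk: "(\<lambda>w. X w $ k) \<in> borel_measurable M" for k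
    using measurable_compose[OF X, of "\<lambda>x. x$k"] by simp
  have As: "A k \<in> sets M" for k unfolding A_def using Xk[of k] by measurable
  interpret B: bn M A by unfold_locales (rule As)
  have less: "measure M {w\<in>space M. X w $ k < r} = 1 - B.m k" for k
  proof -
    have "{w\<in>space M. X w $ k < r} = space M - A k" by (auto simp: A_def)
    then show ?thesis using P.prob_compl[OF As[of k]] by (simp add: B.m_def)
  qed
  have Fl: "((\<lambda>s. 1 - marg_cdf M X k s) \<longlongrightarrow> B.m k) (at_left r)" for k
  proof -
    have "((\<lambda>s. marg_cdf M X k s) \<longlongrightarrow> 1 - B.m k) (at_left r)"
      using cdf_left[OF M Xk[of k], of r] unfolding less by (simp add: marg_cdf_def)
    from tendsto_diff[OF tendsto_const[of 1] this] show ?thesis by simp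
  qed
  have mk: "B.m \<kappa> = c" using less[of \<kappa>] c(1) by simp
  have gam: "\<gamma> k = B.m k / c" for k
  proof -
    have "((\<lambda>s. (1 - marg_cdf M X k s) / (1 - marg_cdf M X \<kappa> s)) \<longlongrightarrow> B.m k / B.m \<kappa>) (at_left r)"
      by (rule tendsto_divide[OF Fl Fl]) (use mk c in simp)
    from tendsto_unique[OF _ this conjunct2[OF rat[rule_format, of k]]] show ?thesis by (simp add: mk)
  qed
  have gl: "((\<lambda>s. 1 - marg_cdf M X \<kappa> s) \<longlongrightarrow> c) (at_left r)" using Fl[of \<kappa>] mk by simp
  show ?thesis
  proof (intro exI conjI allI impI)
    show "is_norm B.Nb" by (rule B.Nb_norm)
    show "B.Nb (axis i 1) = 1" for i by (rule B.Nb_axis)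
    fix K :: "'d set" assume K: "K \<noteq> {}"
    define U where "U = (\<Union>k\<in>K. A k)"
    have Us: "U \<in> sets M" unfolding U_def using As by auto
    have NK: "B.Nb (\<Sum>k\<in>K. \<gamma> k *\<^sub>R axis k 1) = measure M U / c"
      unfolding U_def
    proof (rule B.Nb_gamma[OF c(2)])
      fix k
      show "(\<Sum>k\<in>K. \<gamma> k *\<^sub>R axis k 1) $ k = (if k \<in> K then B.m k / c else 0)"
        by (simp add: sum_component axis_def if_distrib gam cong: if_cong)
    qed
    define Y where "Y w = Max ((\<lambda>k. X w $ k) ` K)" for w
    have Ym: "Y \<in> borel_measurable M" unfolding Y_def[abs_def]
      by (rule borel_measurable_Max) (auto intro: Xk)
    have Yle: "{w\<in>space M. Y w \<le> s} = {w \<in> space M. \<forall>k\<in>K. X w $ k \<le> s}" for s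
      using K by (auto simp: Y_def)
    have Ylt: "measure M {w\<in>space M. Y w < r} = 1 - measure M U"
    proof -
      have "{w\<in>space M. Y w < r} = space M - U" using K by (auto simp: Y_def U_def A_def)
      then show ?thesis using P.prob_compl[OF Us] by simp
    qed
    have PK: "((\<lambda>s. measure M {w \<in> space M. \<forall>k\<in>K. X w $ k \<le> s}) \<longlongrightarrow> 1 - measure M U) (at_left r)"
      using cdf_left[OF M Ym, of r] unfolding Yle Ylt .
    have lim: "((\<lambda>s. measure M {w \<in> space M. \<forall>k\<in>K. X w $ k \<le> s}
             - (1 - (1 - marg_cdf M X \<kappa> s) * B.Nb (\<Sum>k\<in>K. \<gamma> k *\<^sub>R axis k 1))) \<longlongrightarrow>
          (1 - measure M U) - (1 - c * (measure M U / c))) (at_left r)"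
      unfolding NK by (intro tendsto_intros PK gl)
    have "(1 - measure M U) - (1 - c * (measure M U / c)) = 0" using c(2) by simp
    with lim have lim0: "((\<lambda>s. measure M {w \<in> space M. \<forall>k\<in>K. X w $ k \<le> s}
             - (1 - (1 - marg_cdf M X \<kappa> s) * B.Nb (\<Sum>k\<in>K. \<gamma> k *\<^sub>R axis k 1))) \<longlongrightarrow> 0) (at_left r)"
      by simp
    have gpos: "eventually (\<lambda>s. 1 - marg_cdf M X \<kappa> s > 0) (at_left r)"
      using order_tendstoD(1)[OF gl c(2)] .
    show "(\<lambda>s. measure M {w \<in> space M. \<forall>k\<in>K. X w $ k \<le> s}
             - (1 - (1 - marg_cdf M X \<kappa> s) * B.Nb (\<Sum>k\<in>K. \<gamma> k *\<^sub>R axis k 1)))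
      \<in> o[at_left r](\<lambda>s. 1 - marg_cdf M X \<kappa> s)"
    proof (rule smalloI_tendsto)
      show "((\<lambda>s. (measure M {w \<in> space M. \<forall>k\<in>K. X w $ k \<le> s}
             - (1 - (1 - marg_cdf M X \<kappa> s) * B.Nb (\<Sum>k\<in>K. \<gamma> k *\<^sub>R axis k 1))) / (1 - marg_cdf M X \<kappa> s)) \<longlongrightarrow> 0) (at_left r)"
        using tendsto_divide[OF lim0 gl] c(2) by simp
      show "eventually (\<lambda>s. 1 - marg_cdf M X \<kappa> s \<noteq> 0) (at_left r)"
        using gpos by (rule eventually_mono) simp
    qed
  qed
qed


theorem corollary2p2:
  fixes M :: "'a measure" and X :: "'a \<Rightarrow> real^'d"
    and C G :: "real^'d \<Rightarrow> real" and \<kappa> :: 'd and \<gamma> :: "'d \<Rightarrow> real"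
  assumes "prob_space M"
    and "X \<in> borel_measurable M"
    and "is_copula_of C M X"
    and "mevd G"
    and "in_doa C G"
    and "\<forall>i. \<gamma> i \<ge> 0 \<and>
           ((\<lambda>s. (1 - marg_cdf M X i s) / (1 - marg_cdf M X \<kappa> s))
              \<longlongrightarrow> \<gamma> i) (up_to (upper_endpoint (marg_cdf M X \<kappa>)))"
  shows "\<exists>N. is_norm N \<and> (\<forall>i. N (axis i 1) = 1) \<and>
    (\<forall>K. K \<noteq> {} \<longrightarrow>
      (\<lambda>s. measure M {w \<in> space M. \<forall>k\<in>K. X w $ k \<le> s}
             - (1 - (1 - marg_cdf M X \<kappa> s) * N (\<Sum>k\<in>K. \<gamma> k *\<^sub>R axis k 1)))
      \<in> o[up_to (upper_endpoint (marg_cdf M X \<kappa>))](\<lambda>s. 1 - marg_cdf M X \<kappa> s))"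
proof -
  note M = assms(1) and X = assms(2) and rat = assms(6)
  obtain Q where Q: "prob_space Q" "sets Q = sets (borel :: (real^'d) measure)" "C = mdf Q"
      "\<forall>i. \<forall>t\<in>{0..1}. measure Q {y. y $ i \<le> t} = t"
      and D: "distr Q borel (\<lambda>u. \<chi> i. geninv (marg_cdf M X i) (u $ i)) = distr M borel X"
    using assms(3) unfolding is_copula_of_def by blast
  interpret U: uqd Q G
  proof (rule uqd.intro)
    show "uq Q"
    proof (rule uq.intro)
      show "prob_space Q" by (rule Q(1))
      show "sets Q = sets borel" by (rule Q(2))
      show "\<And>i t. t \<in> {0..1} \<Longrightarrow> measure Q {y. y$i \<le> t} = t" using Q(4) by blast
    qed
    show "uqd_axioms Q G" by (rule uqd_axioms.intro) (use assms(5) Q(3) in simp)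
  qed
  define Fk where "Fk = marg_cdf M X \<kappa>"
  have cF: "cdfp Fk" unfolding Fk_def by (rule marg_cdfp[OF M X])
  have gpos: "eventually (\<lambda>s. 1 - Fk s > 0) (up_to (upper_endpoint Fk))"
    using ue_ev[OF cF] by (rule eventually_mono) simp
  have A: ?thesis if g0: "((\<lambda>s. 1 - Fk s) \<longlongrightarrow> 0) (up_to (upper_endpoint Fk))"
  proof (intro exI conjI allI impI)
    show "is_norm U.Nf" by (rule U.Nf_norm)
    show "U.Nf (axis i 1) = 1" for i by (rule U.Nf_axis)
    fix K :: "'d set" assume K: "K \<noteq> {}"
    show "(\<lambda>s. measure M {w \<in> space M. \<forall>k\<in>K. X w $ k \<le> s}
             - (1 - (1 - marg_cdf M X \<kappa> s) * U.Nf (\<Sum>k\<in>K. \<gamma> k *\<^sub>R axis k 1)))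
      \<in> o[up_to (upper_endpoint (marg_cdf M X \<kappa>))](\<lambda>s. 1 - marg_cdf M X \<kappa> s)"
      by (rule U.caseA[OF M X D _ _ rat K]) (use gpos g0 in \<open>simp_all add: Fk_def\<close>)
  qed
  show ?thesis
  proof (cases "upper_endpoint Fk")
    case PInf
    have "(Fk \<longlongrightarrow> 1) at_top" using cF by (simp add: cdfp_def)
    then have "((\<lambda>s. 1 - Fk s) \<longlongrightarrow> 0) at_top"
      using tendsto_diff[OF tendsto_const[of 1]] by fastforce
    then show ?thesis using PInf by (intro A) (simp add: up_to_def)
  next
    case MInf
    then show ?thesis using ue_ne[OF cF] by simp
  next
    case (real r)
    have Fl: "up_to (upper_endpoint Fk) = at_left r" using real by (simp add: up_to_def)
    define c where "c = 1 - measure M {w\<in>space M. X w $ \<kappa> < r}"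
    have Xk: "(\<lambda>w. X w $ \<kappa>) \<in> borel_measurable M"
      using measurable_compose[OF X, of "\<lambda>x. x$\<kappa>"] by simp
    have gl: "((\<lambda>s. 1 - Fk s) \<longlongrightarrow> c) (at_left r)"
      unfolding c_def Fk_def marg_cdf_def
      by (intro tendsto_intros cdf_left[OF M Xk])
    have c0: "0 \<le> c" unfolding c_def using prob_space.prob_le_1[OF M] by simp
    show ?thesis
    proof (cases "c = 0")
      case True
      then show ?thesis using gl Fl by (intro A) simp
    next
      case False
      with c0 have "c > 0" by simp
      from caseB[OF M X c_def this, of \<gamma>] rat Fl show ?thesis by (simp add: Fk_def)
    qed
  qed
qed


end
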